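(* Let $S=\langle \underline{S},\sqcap,\sqcup,\Rightarrow,L,\neg,0,1\rangle$ be a rough algebra, and put $M(x)=\neg L(\neg x)$ for $x\in\underline{S}$. Define the binary relation $T$ on $\underline{S}$ by $(a,b)\in T$ if and only if there exists $c\in\underline{S}$ with $L(c)\le a\le M(c)$ and $L(c)\le b\le M(c)$ (where $\le$ is the lattice order of $\langle\underline{S},\sqcap,\sqcup\rangle$). Then $T$ is a compatible tolerance on $S$: it is reflexive and symmetric, and whenever $(a,b),(c,e)\in T$ we have $(a\sqcap c,\,b\sqcap e)\in T$ and $(a\sqcup c,\,b\sqcup e)\in T$.
   Context: A pre-rough algebra is an algebra $\langle\underline{S},\sqcap,\sqcup,\Rightarrow,L,\neg,0,1\rangle$ of type $(2,2,2,1,1,0,0)$ such that: $\langle\underline{S},\sqcap,\sqcup,\neg\rangle$ is a de Morgan lattice (with bounds $0,1$); $\neg\neg a=a$; $L(a)\sqcap a=L(a)$; $LL(a)=L(a)$; $L(1)=1$; $L(a\sqcap b)=L(a)\sqcap L(b)$; $\neg L\neg L(a)=L(a)$; $\neg L(a)\sqcup L(a)=1$; $L(a\sqcup b)=L(a)\sqcup L(b)$; if $L(a)\sqcap L(b)=L(a)$ and $\neg L(\neg(a\sqcap b))=\neg L(\neg a)$ then $a\sqcap b=a$; and $a\Rightarrow b=(\neg L(a)\sqcup L(b))\sqcap(L(\neg a)\sqcup\neg L(\neg b))$. A rough algebra is a completely distributive pre-rough algebra. The relation $T$ is called the coapproximability relation. *)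

theory Defs
  imports Main
begin

text \<open>We take the
carrier to be a whole type of class complete_distrib_lattice: lattice meet/join are
inf/sup, the bounds 0,1 are bot/top, and complete distributivity is the class axiom.\<close>

definition de_morgan_neg :: "('a::bounded_lattice \<Rightarrow> 'a) \<Rightarrow> bool" where
  "de_morgan_neg neg \<longleftrightarrow> (\<forall>a b. neg (inf a b) = sup (neg a) (neg b))"

definition pre_rough_axioms ::
  "('a::bounded_lattice \<Rightarrow> 'a \<Rightarrow> 'a) \<Rightarrow> ('a \<Rightarrow> 'a) \<Rightarrow> ('a \<Rightarrow> 'a) \<Rightarrow> bool" where
  "pre_rough_axioms imp L neg \<longleftrightarrow>
     de_morgan_neg neg \<and>
     (\<forall>a. neg (neg a) = a) \<and>
     (\<forall>a. inf (L a) a = L a) \<and>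
     (\<forall>a. L (L a) = L a) \<and>
     L top = top \<and>
     (\<forall>a b. L (inf a b) = inf (L a) (L b)) \<and>
     (\<forall>a. neg (L (neg (L a))) = L a) \<and>
     (\<forall>a. sup (neg (L a)) (L a) = top) \<and>
     (\<forall>a b. L (sup a b) = sup (L a) (L b)) \<and>
     (\<forall>a b. inf (L a) (L b) = L a \<and> neg (L (neg (inf a b))) = neg (L (neg a))
            \<longrightarrow> inf a b = a) \<and>
     (\<forall>a b. imp a b = inf (sup (neg (L a)) (L b)) (sup (L (neg a)) (neg (L (neg b)))))"

definition pre_rough_algebra ::
  "('a::{distrib_lattice,bounded_lattice} \<Rightarrow> 'a \<Rightarrow> 'a) \<Rightarrow> ('a \<Rightarrow> 'a) \<Rightarrow> ('a \<Rightarrow> 'a) \<Rightarrow> bool" where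
  "pre_rough_algebra imp L neg \<longleftrightarrow> pre_rough_axioms imp L neg"

definition rough_algebra ::
  "('a::complete_distrib_lattice \<Rightarrow> 'a \<Rightarrow> 'a) \<Rightarrow> ('a \<Rightarrow> 'a) \<Rightarrow> ('a \<Rightarrow> 'a) \<Rightarrow> bool" where
  "rough_algebra imp L neg \<longleftrightarrow> pre_rough_algebra imp L neg"

definition upperM :: "('a \<Rightarrow> 'a) \<Rightarrow> ('a \<Rightarrow> 'a) \<Rightarrow> 'a \<Rightarrow> 'a" where
  "upperM L neg x = neg (L (neg x))"

definition coapprox :: "('a::order \<Rightarrow> 'a) \<Rightarrow> ('a \<Rightarrow> 'a) \<Rightarrow> 'a \<Rightarrow> 'a \<Rightarrow> bool" where
  "coapprox L neg a b \<longleftrightarrow>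
     (\<exists>c. L c \<le> a \<and> a \<le> upperM L neg c \<and> L c \<le> b \<and> b \<le> upperM L neg c)"

end

theory Submission
  imports Defs
begin

theorem proposition2p1:
  fixes imp :: "'a::complete_distrib_lattice \<Rightarrow> 'a \<Rightarrow> 'a"
    and L neg :: "'a \<Rightarrow> 'a"
  assumes "rough_algebra imp L neg"
  shows "(\<forall>a. coapprox L neg a a)
       \<and> (\<forall>a b. coapprox L neg a b \<longrightarrow> coapprox L neg b a)
       \<and> (\<forall>a b c e. coapprox L neg a b \<and> coapprox L neg c e \<longrightarrow>
            coapprox L neg (inf a c) (inf b e) \<and> coapprox L neg (sup a c) (sup b e))"
proof -
  have dm: "\<And>a b. neg (inf a b) = sup (neg a) (neg b)"
    and nn: "\<And>a. neg (neg a) = a"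
    and Li: "\<And>a. inf (L a) a = L a"
    and Linf: "\<And>a b. L (inf a b) = inf (L a) (L b)"
    and Lsup: "\<And>a b. L (sup a b) = sup (L a) (L b)"
    using assms unfolding rough_algebra_def pre_rough_algebra_def pre_rough_axioms_def
      de_morgan_neg_def by auto
  have ds: "neg (sup a b) = inf (neg a) (neg b)" for a b
  proof -
    have "neg (sup a b) = neg (sup (neg (neg a)) (neg (neg b)))" by (simp add: nn)
    also have "\<dots> = neg (neg (inf (neg a) (neg b)))" by (simp add: dm)
    finally show ?thesis by (simp add: nn)
  qed
  have anti: "a \<le> b \<Longrightarrow> neg b \<le> neg a" for a b
  proof -
    assume "a \<le> b"
    then have "inf a b = a" by (rule inf.absorb1)
    then have "neg a = sup (neg a) (neg b)" using dm[of a b] by simp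
    then show ?thesis by (metis sup.cobounded2)
  qed
  have Lle: "L a \<le> a" for a by (metis Li inf.absorb_iff1)
  have Mge: "a \<le> upperM L neg a" for a
    unfolding upperM_def using anti[OF Lle[of "neg a"]] by (simp add: nn)
  have Minf: "upperM L neg (inf c d) = inf (upperM L neg c) (upperM L neg d)" for c d
    unfolding upperM_def by (simp add: dm Lsup ds)
  have Msup: "upperM L neg (sup c d) = sup (upperM L neg c) (upperM L neg d)" for c d
    unfolding upperM_def by (simp add: dm Linf ds)
  have refl: "coapprox L neg a a" for a
    unfolding coapprox_def using Lle Mge by blast
  have sym: "coapprox L neg a b \<Longrightarrow> coapprox L neg b a" for a b
    unfolding coapprox_def by blast
  have comp: "coapprox L neg (inf a c) (inf b e) \<and> coapprox L neg (sup a c) (sup b e)"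
    if h1: "coapprox L neg a b" and h2: "coapprox L neg c e" for a b c e
  proof -
    obtain x where x: "L x \<le> a" "a \<le> upperM L neg x" "L x \<le> b" "b \<le> upperM L neg x"
      using h1 unfolding coapprox_def by blast
    obtain y where y: "L y \<le> c" "c \<le> upperM L neg y" "L y \<le> e" "e \<le> upperM L neg y"
      using h2 unfolding coapprox_def by blast
    have "coapprox L neg (inf a c) (inf b e)"
      unfolding coapprox_def
      by (rule exI[of _ "inf x y"], simp add: Linf Minf x y le_infI1 le_infI2 inf_mono)
    moreover have "coapprox L neg (sup a c) (sup b e)"
      unfolding coapprox_def
      by (rule exI[of _ "sup x y"], simp add: Lsup Msup x y le_supI1 le_supI2 sup_mono)
    ultimately show ?thesis by blast
  qed
  show ?thesis using refl sym comp by blast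
qed

end
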